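(* With the coupled chains $(X,Y)$ described in the context, for every $n\in\mathbb{Z}_+$, $$\mathbb{P}[Z(n)>0]\le\frac{2^N n}{N!},\qquad\text{where } Z(n)=\sum_{k=0}^{n-1}\mathbf{1}_{\{X(k)=Y(k),\,X(k+1)\neq Y(k+1)\}}.$$
   Context: Let $N\ge 5$. For $\sigma\in\mathcal{S}_N$ let $\eta_1(\sigma)$, $\eta_2(\sigma)$ be its numbers of fixed points and 2-cycles, $\nu$ the uniform measure on $\mathcal{S}_N$, $\pi_N$ the law of $\eta_1$ under $\nu$, and $p(x)=\mathbb{E}_\nu[\eta_2\mid\eta_1=x]$. Let $\check\pi$ be $\pi_N$ conditioned on $\{0,\dots,N-4\}$ and $\zeta$ the Poisson(1) law conditioned on $\{0,\dots,N-4\}$. On $\{0,\dots,N-4\}$ define birth–death kernels $\check P$ and $R$ by: for $x\ne y$, $\check P(x,x-1)=R(x,x-1)=\frac{x(N-x)}{N(N-1)}$, $\check P(x,x+1)=\frac{N-x-2p(x)}{N(N-1)}$ for $x\le N-5$, $R(x,x+1)=\frac{N-x-1}{N(N-1)}$ for $x\le N-5$, all other off-diagonal entries $0$, diagonal entries chosen so rows sum to 1. Let $(U(n))_{n\ge0}$ be i.i.d. uniform on $[0,1]$. The chain $X$ starts from $X(0)\sim\check\pi$, $Y$ from $Y(0)\sim\zeta$ (coupled arbitrarily at time 0), and for each $n$: $X(n+1)=X(n)-1$ if $U(n)<\check P(X(n),X(n)-1)$, $X(n+1)=X(n)$ if $\check P(X(n),X(n)-1)\le U(n)<\check P(X(n),X(n)-1)+\check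 P(X(n),X(n))$, and $X(n+1)=X(n)+1$ otherwise; $Y$ is updated by the same rule with $R$ in place of $\check P$ and the same $U(n)$. Thus $X$ is a stationary Markov chain with kernel $\check P$ and law $\check\pi$, and $Y$ a stationary Markov chain with kernel $R$ and law $\zeta$. *)

theory Defs
  imports "HOL-Probability.Probability"
begin

definition perms :: "nat \<Rightarrow> (nat \<Rightarrow> nat) set" where
  "perms N = {\<sigma>. \<sigma> permutes {..<N}}"

definition eta1 :: "nat \<Rightarrow> (nat \<Rightarrow> nat) \<Rightarrow> nat" where
  "eta1 N \<sigma> = card {i. i < N \<and> \<sigma> i = i}"

definition eta2 :: "nat \<Rightarrow> (nat \<Rightarrow> nat) \<Rightarrow> nat" where
  "eta2 N \<sigma> = card {{i, \<sigma> i} | i. i < N \<and> \<sigma> i \<noteq> i \<and> \<sigma> (\<sigma> i) = i}"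

definition piN :: "nat \<Rightarrow> nat \<Rightarrow> real" where
  "piN N x = real (card {\<sigma> \<in> perms N. eta1 N \<sigma> = x}) / real (card (perms N))"

definition pcond :: "nat \<Rightarrow> nat \<Rightarrow> real" where
  "pcond N x = (\<Sum>\<sigma>\<in>{\<sigma> \<in> perms N. eta1 N \<sigma> = x}. real (eta2 N \<sigma>))
               / real (card {\<sigma> \<in> perms N. eta1 N \<sigma> = x})"

definition checkpi :: "nat \<Rightarrow> nat \<Rightarrow> real" where
  "checkpi N x = (if x \<le> N - 4 then piN N x / (\<Sum>y\<le>N - 4. piN N y) else 0)"

definition zeta :: "nat \<Rightarrow> nat \<Rightarrow> real" where
  "zeta N x = (if x \<le> N - 4 then (exp (-1) / fact x) / (\<Sum>y\<le>N - 4. exp (-1) / fact y) else 0)"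

definition down :: "nat \<Rightarrow> nat \<Rightarrow> real" where
  "down N x = real x * (real N - real x) / (real N * (real N - 1))"

definition upP :: "nat \<Rightarrow> nat \<Rightarrow> real" where
  "upP N x = (if x \<le> N - 5 then (real N - real x - 2 * pcond N x) / (real N * (real N - 1)) else 0)"

definition upR :: "nat \<Rightarrow> nat \<Rightarrow> real" where
  "upR N x = (if x \<le> N - 5 then (real N - real x - 1) / (real N * (real N - 1)) else 0)"

definition stay :: "(nat \<Rightarrow> real) \<Rightarrow> (nat \<Rightarrow> real) \<Rightarrow> nat \<Rightarrow> real" where
  "stay dn up x = 1 - dn x - up x"

definition step :: "(nat \<Rightarrow> real) \<Rightarrow> (nat \<Rightarrow> real) \<Rightarrow> nat \<Rightarrow> real \<Rightarrow> nat" where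
  "step dn up x u =
     (if u < dn x then x - 1
      else if u < dn x + stay dn up x then x
      else x + 1)"

fun chain :: "(nat \<Rightarrow> real) \<Rightarrow> (nat \<Rightarrow> real) \<Rightarrow> nat \<Rightarrow> (nat \<Rightarrow> real) \<Rightarrow> nat \<Rightarrow> nat" where
  "chain dn up x0 u 0 = x0"
| "chain dn up x0 u (Suc n) = step dn up (chain dn up x0 u n) (u n)"

definition Xchain :: "nat \<Rightarrow> nat \<Rightarrow> (nat \<Rightarrow> real) \<Rightarrow> nat \<Rightarrow> nat" where
  "Xchain N x0 u = chain (down N) (upP N) x0 u"

definition Ychain :: "nat \<Rightarrow> nat \<Rightarrow> (nat \<Rightarrow> real) \<Rightarrow> nat \<Rightarrow> nat" where
  "Ychain N y0 u = chain (down N) (upR N) y0 u"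

definition Zcount :: "nat \<Rightarrow> nat \<Rightarrow> nat \<Rightarrow> (nat \<Rightarrow> real) \<Rightarrow> nat \<Rightarrow> nat" where
  "Zcount N x0 y0 u n = card {k. k < n \<and> Xchain N x0 u k = Ychain N y0 u k
                                    \<and> Xchain N x0 u (k + 1) \<noteq> Ychain N y0 u (k + 1)}"

end

theory Submission
  imports Defs "HOL-Combinatorics.Permutations"
begin


definition FF :: "nat \<Rightarrow> nat \<Rightarrow> nat" where
  "FF N x = card {\<sigma> \<in> perms N. eta1 N \<sigma> = x}"

lemma finite_perms: "finite (perms N)"
  unfolding perms_def by (simp add: finite_permutations)

lemma card_perms: "card (perms N) = fact N"
  unfolding perms_def by (simp add: card_permutations)

lemma eta1_swap_self:
  assumes "q permutes {..<n}"
  shows "eta1 (Suc n) (Transposition.transpose n n \<circ> q) = Suc (eta1 n q)"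
proof -
  have "{i. i < Suc n \<and> (Transposition.transpose n n \<circ> q) i = i} = insert n {i. i < n \<and> q i = i}"
    using assms by (auto simp: permutes_not_in)
  thus ?thesis unfolding eta1_def by simp
qed

lemma eta1_Suc_id: "q permutes {..<n} \<Longrightarrow> eta1 (Suc n) q = Suc (eta1 n q)"
  using eta1_swap_self[of q n] by simp

lemma eta1_swap_other:
  assumes "q permutes {..<n}" "b < n"
  shows "eta1 (Suc n) (Transposition.transpose n b \<circ> q) = eta1 n q - (if q b = b then 1 else 0)"
proof -
  have qlt: "i < n \<Longrightarrow> q i < n" for i using assms(1) permutes_in_image by fastforce
  have "{i. i < Suc n \<and> (Transposition.transpose n b \<circ> q) i = i} = {i. i < n \<and> q i = i} - {b}"
  proof (rule set_eqI)
    fix i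
    show "i \<in> {i. i < Suc n \<and> (Transposition.transpose n b \<circ> q) i = i} \<longleftrightarrow> i \<in> {i. i < n \<and> q i = i} - {b}"
    proof (cases "i = n")
      case True
      then show ?thesis using assms permutes_not_in[OF assms(1), of n] by (simp add: Transposition.transpose_def)
    next
      case False
      show ?thesis
      proof (cases "i < n")
        case True
        then have "q i < n" using qlt by blast
        then show ?thesis using True assms(2) by (auto simp: Transposition.transpose_def)
      next
        case f2: False
        then show ?thesis using False by simp
      qed
    qed
  qed
  thus ?thesis unfolding eta1_def using assms(2) by (simp add: card_Diff_singleton_if)
qed


lemma eta1_le: "eta1 n q \<le> n"
proof -
  have "{i. i < n \<and> q i = i} \<subseteq> {..<n}" by auto
  hence "card {i. i < n \<and> q i = i} \<le> card {..<n}" by (intro card_mono) auto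
  thus ?thesis unfolding eta1_def by simp
qed

lemma card_nonfix: "card {b. b < n \<and> q b \<noteq> b} = n - eta1 n q"
proof -
  have "{b. b < n \<and> q b \<noteq> b} = {..<n} - {i. i < n \<and> q i = i}" by auto
  moreover have "card ({..<n} - {i. i < n \<and> q i = i}) = card {..<n} - card {i. i < n \<and> q i = i}"
    by (rule card_Diff_subset) auto
  ultimately show ?thesis unfolding eta1_def by simp
qed

lemma count_b:
  assumes q: "q permutes {..<n}"
  shows "card {b. b < n \<and> eta1 n q - (if q b = b then 1 else 0) = x}
     = (if eta1 n q = x + 1 then x + 1 else 0) + (if eta1 n q = x then n - x else 0)"
proof (cases "eta1 n q = x")
  case True
  have pos: "q b = b \<Longrightarrow> b < n \<Longrightarrow> eta1 n q \<ge> 1" for b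
  proof -
    assume "q b = b" "b < n"
    hence "b \<in> {i. i < n \<and> q i = i}" by auto
    hence "card {i. i < n \<and> q i = i} \<noteq> 0" by (metis card_0_eq empty_iff finite_Collect_conjI finite_Collect_less_nat)
    thus ?thesis unfolding eta1_def by linarith
  qed
  have "{b. b < n \<and> eta1 n q - (if q b = b then 1 else 0) = x} = {b. b < n \<and> q b \<noteq> b}"
    using True pos by force
  thus ?thesis using True card_nonfix[of n q] by simp
next
  case False
  note F = False
  show ?thesis
  proof (cases "eta1 n q = x + 1")
    case True
    have "{b. b < n \<and> eta1 n q - (if q b = b then 1 else 0) = x} = {b. b < n \<and> q b = b}"
      using True by auto
    thus ?thesis using True unfolding eta1_def by simp
  next
    case False
    have "{b. b < n \<and> eta1 n q - (if q b = b then 1 else 0) = x} = {}"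
      using False F by auto
    thus ?thesis using False F by simp
  qed
qed

lemma sum_const_if: "(\<Sum>q\<in>A. if P q then c else 0) = c * (\<Sum>q\<in>A. if P q then 1 else (0::nat))"
  by (subst sum_distrib_left) (rule sum.cong, auto)

lemma FF_Suc:
  "FF (Suc n) x = (if x \<ge> 1 then FF n (x - 1) else 0) + (x + 1) * FF n (x + 1) + (n - x) * FF n x"
proof -
  let ?E = "eta1 n"
  let ?f = "\<lambda>\<sigma>. if eta1 (Suc n) \<sigma> = x then (1::nat) else 0"
  have cardsum: "card {\<sigma> \<in> perms m. eta1 m \<sigma> = y} = (\<Sum>\<sigma>\<in>perms m. if eta1 m \<sigma> = y then 1 else 0)" for m y
    using finite_perms[of m] by (simp add: sum.If_cases Int_def)
  have "FF (Suc n) x = (\<Sum>\<sigma>\<in>perms (Suc n). ?f \<sigma>)"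
    by (simp only: FF_def cardsum)
  also have "\<dots> = (\<Sum>\<sigma>\<in>{p. p permutes insert n {..<n}}. ?f \<sigma>)"
    by (simp add: perms_def lessThan_Suc)
  also have "\<dots> = (\<Sum>b\<in>insert n {..<n}. \<Sum>q\<in>{p. p permutes {..<n}}. ?f (Transposition.transpose n b \<circ> q))"
    by (rule sum_over_permutations_insert) auto
  also have "\<dots> = (\<Sum>q\<in>perms n. ?f (Transposition.transpose n n \<circ> q))
       + (\<Sum>b<n. \<Sum>q\<in>perms n. ?f (Transposition.transpose n b \<circ> q))"
    by (simp add: perms_def)
  also have "(\<Sum>q\<in>perms n. ?f (Transposition.transpose n n \<circ> q)) = (\<Sum>q\<in>perms n. if Suc (?E q) = x then 1 else 0)"
    by (rule sum.cong) (auto simp: perms_def eta1_Suc_id)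
  also have "(\<Sum>b<n. \<Sum>q\<in>perms n. ?f (Transposition.transpose n b \<circ> q))
      = (\<Sum>q\<in>perms n. \<Sum>b<n. if ?E q - (if q b = b then 1 else 0) = x then 1 else 0)"
    by (subst sum.swap) (rule sum.cong, simp, rule sum.cong, auto simp: perms_def eta1_swap_other)
  also have "\<dots> = (\<Sum>q\<in>perms n. (if ?E q = x + 1 then x + 1 else 0) + (if ?E q = x then n - x else 0))"
  proof (rule sum.cong)
    fix q assume "q \<in> perms n"
    hence q: "q permutes {..<n}" by (simp add: perms_def)
    have "(\<Sum>b<n. if ?E q - (if q b = b then 1 else 0) = x then 1 else (0::nat))
        = card {b. b < n \<and> ?E q - (if q b = b then 1 else 0) = x}"
      by (simp add: sum.If_cases lessThan_def Collect_conj_eq Int_commute)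
    thus "(\<Sum>b<n. if ?E q - (if q b = b then 1 else 0) = x then 1 else (0::nat))
        = (if ?E q = x + 1 then x + 1 else 0) + (if ?E q = x then n - x else 0)"
      using count_b[OF q, of x] by simp
  qed simp
  also have "\<dots> = (x + 1) * FF n (x + 1) + (n - x) * FF n x"
    unfolding FF_def cardsum sum.distrib
    by (subst (1 2) sum_const_if) simp
  also have "(\<Sum>q\<in>perms n. if Suc (?E q) = x then 1 else (0::nat)) = (if x \<ge> 1 then FF n (x - 1) else 0)"
  proof (cases x)
    case 0 thus ?thesis by simp
  next
    case (Suc y)
    thus ?thesis unfolding FF_def cardsum by simp
  qed
  finally show ?thesis by simp
qed


fun AA :: "nat \<Rightarrow> int" where
  "AA 0 = 1"
| "AA (Suc k) = int (Suc k) * AA k + (-1) ^ Suc k"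

lemma AA_rec2: "AA (Suc (Suc k)) = int (Suc k) * (AA (Suc k) + AA k)"
  by (simp add: algebra_simps)

lemma AA_1: "AA 1 = 0" by simp

declare AA.simps(2)[simp del]

lemma FF_0: "FF 0 x = (if x = 0 then 1 else 0)"
proof -
  have "perms 0 = {id}" by (auto simp: perms_def)
  moreover have "eta1 0 id = 0" by (simp add: eta1_def)
  ultimately have "{\<sigma> \<in> perms 0. eta1 0 \<sigma> = x} = (if x = 0 then {id} else {})" by auto
  thus ?thesis unfolding FF_def by simp
qed

lemma FF_gt: "x > n \<Longrightarrow> FF n x = 0"
  unfolding FF_def using eta1_le[of n] by (metis (mono_tags, lifting) card.empty empty_Collect_eq leD)

lemma absorb: "(x + 1) * (n choose (x + 1)) = (n - x) * (n choose x)"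
  using binomial_absorption[of x n] binomial_absorb_comp[of n x] by simp

lemma FF_closed: "int (FF n x) = (if x \<le> n then int (n choose x) * AA (n - x) else 0)"
proof (induction n arbitrary: x)
  case 0
  then show ?case by (simp add: FF_0)
next
  case (Suc n)
  have rec0: "int (FF (Suc n) x) = int (if x \<ge> 1 then FF n (x - 1) else 0) + int (x + 1) * int (FF n (x + 1)) + int (n - x) * int (FF n x)"
    using arg_cong[OF FF_Suc[of n x], of int] by (simp only: of_nat_add of_nat_mult)
  have rec: "int (FF (Suc n) x) = (if x \<ge> 1 then int (FF n (x - 1)) else 0) + int (x + 1) * int (FF n (x + 1)) + int (n - x) * int (FF n x)"
    using rec0 by (simp split: if_splits)
  show ?case
  proof (cases "x \<le> n")
    case False
    show ?thesis
    proof (cases "x = Suc n")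
      case True
      then show ?thesis using rec Suc.IH[of n] Suc.IH[of "Suc (Suc n)"] Suc.IH[of "Suc n"] by simp
    next
      case f2: False
      have "x - 1 > n" using False f2 by simp
      then show ?thesis using False rec FF_gt[of n "x - 1"] FF_gt[of n "x + 1"] FF_gt[of n x] by simp
    qed
  next
    case True
    define m where "m = n - x"
    have nm: "n = x + m" using True m_def by simp
    show ?thesis
    proof (cases x)
      case 0
      show ?thesis
      proof (cases n)
        case 0
        then show ?thesis using \<open>x = 0\<close> rec Suc.IH[of 0] Suc.IH[of 1] AA_1 by simp
      next
        case (Suc k)
        have "int (FF (Suc n) x) = int (Suc k) * AA k + int (Suc k) * AA (Suc k)"
          using rec Suc.IH[of 0] Suc.IH[of 1] \<open>x = 0\<close> \<open>n = Suc k\<close> by simp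
        also have "\<dots> = AA (Suc n)" using AA_rec2[of k] \<open>n = Suc k\<close> by (simp add: algebra_simps)
        finally show ?thesis using \<open>x = 0\<close> by simp
      qed
    next
      case (Suc y)
      have t1: "int (FF n (x - 1)) = int (n choose y) * AA (Suc m)"
        using Suc.IH[of y] \<open>x = Suc y\<close> nm by simp
      have t3: "int (FF n x) = int (n choose x) * AA m"
        using Suc.IH[of x] True m_def by simp
      have key: "int (x + 1) * int (FF n (x + 1)) + int (n - x) * int (FF n x) = int (n choose x) * AA (Suc m)"
      proof (cases m)
        case 0
        then have "FF n (x + 1) = 0" using FF_gt nm by simp
        then show ?thesis using 0 nm AA_1 by simp
      next
        case (Suc k)
        have "int (x + 1) * int (FF n (x + 1)) = int ((x + 1) * (n choose (x + 1))) * AA k"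
          using Suc.IH[of "x + 1"] nm \<open>m = Suc k\<close> by (simp add: algebra_simps)
        also have "\<dots> = int (m * (n choose x)) * AA k" using absorb[of x n] nm by simp
        finally have "int (x + 1) * int (FF n (x + 1)) + int (n - x) * int (FF n x)
           = int (n choose x) * (int (Suc k) * (AA k + AA (Suc k)))"
          using t3 nm \<open>m = Suc k\<close> by (simp add: algebra_simps)
        then show ?thesis using AA_rec2[of k] \<open>m = Suc k\<close> by simp
      qed
      have "int (FF (Suc n) x) = int (n choose y) * AA (Suc m) + int (n choose x) * AA (Suc m)"
        using rec t1 key \<open>x = Suc y\<close> by simp
      also have "\<dots> = int (Suc n choose x) * AA (Suc n - x)"
        using \<open>x = Suc y\<close> nm by (simp add: algebra_simps)
      finally show ?thesis using True by simp
    qed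
  qed
qed


definition GG :: "nat \<Rightarrow> nat \<Rightarrow> nat" where
  "GG N x = (\<Sum>\<sigma>\<in>{\<sigma> \<in> perms N. eta1 N \<sigma> = x}. eta2 N \<sigma>)"

definition C2 :: "nat \<Rightarrow> (nat \<Rightarrow> nat) \<Rightarrow> nat set set" where
  "C2 N \<sigma> = {{i, \<sigma> i} | i. i < N \<and> \<sigma> i \<noteq> i \<and> \<sigma> (\<sigma> i) = i}"

definition P2 :: "nat \<Rightarrow> (nat \<Rightarrow> nat) \<Rightarrow> nat set set" where
  "P2 N \<tau> = {e. e \<subseteq> {i. i < N \<and> \<tau> i = i} \<and> card e = 2}"

definition phi :: "nat set \<Rightarrow> (nat \<Rightarrow> nat) \<Rightarrow> nat \<Rightarrow> nat" where
  "phi e \<sigma> = (\<lambda>k. if k \<in> e then k else \<sigma> k)"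

definition psi :: "nat set \<Rightarrow> (nat \<Rightarrow> nat) \<Rightarrow> nat \<Rightarrow> nat" where
  "psi e \<tau> = (\<lambda>k. if k \<in> e then \<Sum>e - k else \<tau> k)"

lemma phi_ok:
  assumes s: "\<sigma> permutes {..<N}" and i: "i < N" "\<sigma> i \<noteq> i" "\<sigma> (\<sigma> i) = i"
  shows "phi {i, \<sigma> i} \<sigma> permutes {..<N}"
    "eta1 N (phi {i, \<sigma> i} \<sigma>) = eta1 N \<sigma> + 2"
    "{i, \<sigma> i} \<in> P2 N (phi {i, \<sigma> i} \<sigma>)"
    "psi {i, \<sigma> i} (phi {i, \<sigma> i} \<sigma>) = \<sigma>"
proof -
  define j where "j = \<sigma> i"
  have ij: "i \<noteq> j" "\<sigma> j = i" "\<sigma> i = j" using i unfolding j_def by auto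
  have jN: "j < N" using s i permutes_in_image unfolding j_def by fastforce
  have pi: "phi {i, j} \<sigma> i = i" and pj: "phi {i, j} \<sigma> j = j" unfolding phi_def by simp_all
  have po: "k \<noteq> i \<Longrightarrow> k \<noteq> j \<Longrightarrow> phi {i, j} \<sigma> k = \<sigma> k" for k unfolding phi_def by simp
  have eq: "phi {i, j} \<sigma> = \<sigma> \<circ> Transposition.transpose i j"
  proof
    fix k show "phi {i, j} \<sigma> k = (\<sigma> \<circ> Transposition.transpose i j) k"
      by (cases "k = i"; cases "k = j") (simp_all add: pi pj po ij ij(1)[symmetric] Transposition.transpose_def)
  qed
  show "phi {i, \<sigma> i} \<sigma> permutes {..<N}"
    unfolding j_def[symmetric] eq using s i jN by (intro permutes_compose permutes_swap_id) auto
  have fx: "{k. k < N \<and> phi {i, j} \<sigma> k = k} = insert i (insert j {k. k < N \<and> \<sigma> k = k})"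
  proof (rule set_eqI)
    fix k show "k \<in> {k. k < N \<and> phi {i, j} \<sigma> k = k} \<longleftrightarrow> k \<in> insert i (insert j {k. k < N \<and> \<sigma> k = k})"
      by (cases "k = i"; cases "k = j") (simp_all add: pi pj po ij ij(1)[symmetric] i(1) jN)
  qed
  have nf: "i \<notin> {k. k < N \<and> \<sigma> k = k}" "j \<notin> {k. k < N \<and> \<sigma> k = k}"
    using ij by auto
  then show "eta1 N (phi {i, \<sigma> i} \<sigma>) = eta1 N \<sigma> + 2"
    unfolding eta1_def j_def[symmetric] fx using ij(1) by simp
  show "{i, \<sigma> i} \<in> P2 N (phi {i, \<sigma> i} \<sigma>)"
    unfolding P2_def j_def[symmetric] fx using ij(1) by simp
  have se: "\<Sum>{i, j} = i + j" using ij(1) by simp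
  show "psi {i, \<sigma> i} (phi {i, \<sigma> i} \<sigma>) = \<sigma>"
  proof
    fix k show "psi {i, \<sigma> i} (phi {i, \<sigma> i} \<sigma>) k = \<sigma> k"
      unfolding j_def[symmetric]
      by (cases "k = i"; cases "k = j") (simp_all add: psi_def se pi pj po ij ij(1)[symmetric])
  qed
qed

lemma psi_ok:
  assumes t: "\<tau> permutes {..<N}" and e: "e \<in> P2 N \<tau>"
  shows "psi e \<tau> permutes {..<N}"
    "eta1 N (psi e \<tau>) = eta1 N \<tau> - 2"
    "e \<in> C2 N (psi e \<tau>)"
    "phi e (psi e \<tau>) = \<tau>"
proof -
  obtain a b where ab: "e = {a, b}" "a \<noteq> b" using e unfolding P2_def by (auto simp: card_2_iff)
  have fa: "a < N" "\<tau> a = a" "b < N" "\<tau> b = b" using e ab unfolding P2_def by auto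
  have se: "\<Sum>e = a + b" using ab by simp
  have pa: "psi e \<tau> a = b" and pb: "psi e \<tau> b = a" unfolding psi_def using se ab by simp_all
  have po: "k \<noteq> a \<Longrightarrow> k \<noteq> b \<Longrightarrow> psi e \<tau> k = \<tau> k" for k unfolding psi_def ab(1) by simp
  have eq: "psi e \<tau> = \<tau> \<circ> Transposition.transpose a b"
  proof
    fix k show "psi e \<tau> k = (\<tau> \<circ> Transposition.transpose a b) k"
      by (cases "k = a"; cases "k = b") (simp_all add: pa pb po fa ab(2) ab(2)[symmetric] Transposition.transpose_def)
  qed
  show "psi e \<tau> permutes {..<N}"
    unfolding eq using t fa by (intro permutes_compose permutes_swap_id) auto
  have fx: "{k. k < N \<and> psi e \<tau> k = k} = {k. k < N \<and> \<tau> k = k} - {a, b}"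
  proof (rule set_eqI)
    fix k show "k \<in> {k. k < N \<and> psi e \<tau> k = k} \<longleftrightarrow> k \<in> {k. k < N \<and> \<tau> k = k} - {a, b}"
      by (cases "k = a"; cases "k = b") (simp_all add: pa pb po ab(2) ab(2)[symmetric])
  qed
  have "{a, b} \<subseteq> {k. k < N \<and> \<tau> k = k}" using fa by auto
  then show "eta1 N (psi e \<tau>) = eta1 N \<tau> - 2"
    unfolding eta1_def fx using ab by (simp add: card_Diff_subset)
  have "e = {a, psi e \<tau> a}" "a < N" "psi e \<tau> a \<noteq> a" "psi e \<tau> (psi e \<tau> a) = a"
    using pa pb ab fa by auto
  then show "e \<in> C2 N (psi e \<tau>)"
    unfolding C2_def by blast
  show "phi e (psi e \<tau>) = \<tau>"
  proof
    fix k show "phi e (psi e \<tau>) k = \<tau> k"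
      by (cases "k = a"; cases "k = b") (simp_all add: phi_def ab pa pb po fa ab(2)[symmetric] psi_def)
  qed
qed

lemma finite_C2: "finite (C2 N \<sigma>)"
proof -
  have "C2 N \<sigma> \<subseteq> (\<lambda>i. {i, \<sigma> i}) ` {..<N}" unfolding C2_def by auto
  thus ?thesis by (rule finite_subset) auto
qed

lemma card_P2: "card (P2 N \<tau>) = eta1 N \<tau> choose 2"
  unfolding P2_def eta1_def by (rule n_subsets) simp

lemma GG_eq: "GG N x = ((x + 2) choose 2) * FF N (x + 2)"
proof -
  let ?S1 = "SIGMA \<sigma>:{\<sigma> \<in> perms N. eta1 N \<sigma> = x}. C2 N \<sigma>"
  let ?S2 = "SIGMA \<tau>:{\<tau> \<in> perms N. eta1 N \<tau> = x + 2}. P2 N \<tau>"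
  have fin1: "finite {\<sigma> \<in> perms N. eta1 N \<sigma> = x}" using finite_perms by simp
  have fin2: "finite {\<tau> \<in> perms N. eta1 N \<tau> = x + 2}" using finite_perms by simp
  have "GG N x = card ?S1"
    unfolding GG_def using fin1 finite_C2 by (simp add: eta2_def C2_def)
  also have "card ?S1 = card ?S2"
  proof (rule bij_betw_same_card[of "\<lambda>p. (phi (snd p) (fst p), snd p)"],
         rule bij_betw_byWitness[of _ "\<lambda>p. (psi (snd p) (fst p), snd p)"])
    show "\<forall>a\<in>?S1. (\<lambda>p. (psi (snd p) (fst p), snd p)) ((\<lambda>p. (phi (snd p) (fst p), snd p)) a) = a"
    proof
      fix a assume "a \<in> ?S1"
      then obtain \<sigma> e where a: "a = (\<sigma>, e)" "\<sigma> \<in> perms N" "e \<in> C2 N \<sigma>" by blast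
      then obtain i where "e = {i, \<sigma> i}" "i < N" "\<sigma> i \<noteq> i" "\<sigma> (\<sigma> i) = i" "\<sigma> permutes {..<N}"
        unfolding C2_def perms_def by blast
      then show "(\<lambda>p. (psi (snd p) (fst p), snd p)) ((\<lambda>p. (phi (snd p) (fst p), snd p)) a) = a"
        using phi_ok(4)[of \<sigma> N i] a(1) by simp
    qed
    show "\<forall>a\<in>?S2. (\<lambda>p. (phi (snd p) (fst p), snd p)) ((\<lambda>p. (psi (snd p) (fst p), snd p)) a) = a"
    proof
      fix a assume "a \<in> ?S2"
      then obtain \<tau> e where a: "a = (\<tau>, e)" "\<tau> \<in> perms N" "e \<in> P2 N \<tau>" by blast
      then show "(\<lambda>p. (phi (snd p) (fst p), snd p)) ((\<lambda>p. (psi (snd p) (fst p), snd p)) a) = a"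
        using psi_ok(4)[of \<tau> N e] unfolding perms_def by simp
    qed
    show "(\<lambda>p. (phi (snd p) (fst p), snd p)) ` ?S1 \<subseteq> ?S2"
    proof
      fix b assume "b \<in> (\<lambda>p. (phi (snd p) (fst p), snd p)) ` ?S1"
      then obtain \<sigma> e where b: "b = (phi e \<sigma>, e)" "\<sigma> \<in> perms N" "eta1 N \<sigma> = x" "e \<in> C2 N \<sigma>" by force
      then obtain i where "e = {i, \<sigma> i}" "i < N" "\<sigma> i \<noteq> i" "\<sigma> (\<sigma> i) = i" "\<sigma> permutes {..<N}"
        unfolding C2_def perms_def by blast
      then have "phi e \<sigma> \<in> perms N" "eta1 N (phi e \<sigma>) = x + 2" "e \<in> P2 N (phi e \<sigma>)"
        using phi_ok(1-3)[of \<sigma> N i] \<open>eta1 N \<sigma> = x\<close> unfolding perms_def by simp_all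
      then show "b \<in> ?S2" using b(1) by simp
    qed
    show "(\<lambda>p. (psi (snd p) (fst p), snd p)) ` ?S2 \<subseteq> ?S1"
    proof
      fix b assume "b \<in> (\<lambda>p. (psi (snd p) (fst p), snd p)) ` ?S2"
      then obtain \<tau> e where b: "b = (psi e \<tau>, e)" "\<tau> \<in> perms N" "eta1 N \<tau> = x + 2" "e \<in> P2 N \<tau>" by force
      then have "psi e \<tau> \<in> perms N" "eta1 N (psi e \<tau>) = x" "e \<in> C2 N (psi e \<tau>)"
        using psi_ok[of \<tau> N e] unfolding perms_def by simp_all
      then show "b \<in> ?S1" using b(1) by simp
    qed
  qed
  also have "card ?S2 = (\<Sum>\<tau>\<in>{\<tau> \<in> perms N. eta1 N \<tau> = x + 2}. card (P2 N \<tau>))"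
    using fin2 by (simp add: P2_def)
  also have "\<dots> = ((x + 2) choose 2) * FF N (x + 2)"
    unfolding card_P2 FF_def by simp
  finally show ?thesis .
qed


lemma AA_nonneg: "AA k \<ge> 0 \<and> AA (Suc k) \<ge> 0"
proof (induction k)
  case 0 then show ?case by (simp add: AA.simps)
next
  case (Suc k) then show ?case by (simp add: AA_rec2)
qed

lemma AA_ge: "AA (Suc (Suc k)) \<ge> fact (Suc k)"
proof (induction k)
  case 0 then show ?case by (simp add: AA.simps)
next
  case (Suc k)
  have "AA (Suc (Suc (Suc k))) = int (Suc (Suc k)) * (AA (Suc (Suc k)) + AA (Suc k))" by (rule AA_rec2)
  also have "\<dots> \<ge> int (Suc (Suc k)) * AA (Suc (Suc k))" using AA_nonneg[of "Suc k"] by (intro mult_left_mono) auto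
  finally have 1: "AA (Suc (Suc (Suc k))) \<ge> int (Suc (Suc k)) * AA (Suc (Suc k))" .
  have 2: "int (Suc (Suc k)) * AA (Suc (Suc k)) \<ge> int (Suc (Suc k)) * fact (Suc k)"
    using Suc.IH by (intro mult_left_mono) auto
  have 3: "int (Suc (Suc k)) * fact (Suc k) = fact (Suc (Suc k))"
    by (simp only: fact_Suc[of "Suc k"] of_nat_mult)
  show ?case using 1 2 3 by linarith
qed

lemma AA_diff: "AA (Suc (Suc k)) - int (Suc (Suc k)) * int (Suc k) * AA k = (-1) ^ Suc k * int (Suc k)"
  by (simp add: AA.simps algebra_simps)

lemma key_FF:
  assumes N: "N = x + k + 2"
  shows "int (FF N x) = int (N choose x) * AA (k + 2)"
    "int (x + 1) * int (FF N (x + 1)) = int (N choose x) * int (k + 2) * AA (k + 1)"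
    "2 * int (GG N x) = int (N choose x) * int (k + 2) * int (k + 1) * AA k"
proof -
  have e0: "x \<le> N" "N - x = k + 2" "x + 1 \<le> N" "N - (x + 1) = k + 1" "x + 2 \<le> N" "N - (x + 2) = k"
    using N by simp_all
  have f0: "int (FF N x) = int (N choose x) * AA (k + 2)" using FF_closed[of N x] e0 by simp
  have f1: "int (FF N (x + 1)) = int (N choose (x + 1)) * AA (k + 1)" using FF_closed[of N "x + 1"] e0 by simp
  have f2: "int (FF N (x + 2)) = int (N choose (x + 2)) * AA k" using FF_closed[of N "x + 2"] e0 by simp
  show "int (FF N x) = int (N choose x) * AA (k + 2)" by (rule f0)
  have ab1: "(x + 1) * (N choose (x + 1)) = (k + 2) * (N choose x)" using absorb[of x N] e0 by simp
  have ab2: "(x + 2) * (N choose (x + 2)) = (k + 1) * (N choose (x + 1))" using absorb[of "x + 1" N] e0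
    by (simp add: add.commute)
  have "int (x + 1) * int (FF N (x + 1)) = int ((x + 1) * (N choose (x + 1))) * AA (k + 1)"
    unfolding f1 by (simp add: algebra_simps)
  also have "\<dots> = int (N choose x) * int (k + 2) * AA (k + 1)" unfolding ab1 by (simp add: algebra_simps)
  finally show "int (x + 1) * int (FF N (x + 1)) = int (N choose x) * int (k + 2) * AA (k + 1)" .
  have c2: "2 * ((x + 2) choose 2) = (x + 2) * (x + 1)"
    by (simp add: choose_two)
  have "2 * int (GG N x) = int (2 * ((x + 2) choose 2)) * int (FF N (x + 2))"
    unfolding GG_eq by simp
  also have "\<dots> = int ((x + 1) * ((x + 2) * (N choose (x + 2)))) * AA k"
    unfolding c2 f2 by (simp add: algebra_simps)
  also have "\<dots> = int ((x + 1) * (N choose (x + 1)) * (k + 1)) * AA k"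
    unfolding ab2 by (simp add: algebra_simps)
  also have "\<dots> = int (N choose x) * int (k + 2) * int (k + 1) * AA k"
    unfolding ab1 by (simp add: algebra_simps)
  finally show "2 * int (GG N x) = int (N choose x) * int (k + 2) * int (k + 1) * AA k" .
qed


lemma piN_eq: "piN N x = real (FF N x) / fact N"
  unfolding piN_def FF_def card_perms by simp

lemma pcond_eq: "pcond N x = real (GG N x) / real (FF N x)"
  unfolding pcond_def GG_def FF_def by simp

lemma split_N: "x + 2 \<le> (N::nat) \<Longrightarrow> N = x + (N - x - 2) + 2" by simp

lemma FF_pos: "x + 2 \<le> N \<Longrightarrow> FF N x > 0"
proof -
  assume a: "x + 2 \<le> N"
  note k = key_FF(1)[OF split_N[OF a]]
  have "AA (Suc (Suc (N - x - 2))) \<ge> fact (Suc (N - x - 2))" by (rule AA_ge)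
  moreover have "(fact (Suc (N - x - 2)) :: int) \<ge> 1" by (rule fact_ge_1)
  ultimately have A1: "AA (N - x - 2 + 2) \<ge> 1" by simp
  have "0 < N choose x" using a by (intro zero_less_binomial) simp
  hence C1: "int (N choose x) \<ge> 1" by (simp add: Suc_le_eq)
  have "int (N choose x) * AA (N - x - 2 + 2) \<ge> 1 * 1"
    by (rule mult_mono[OF C1 A1]) simp_all
  hence "int (FF N x) \<ge> 1" unfolding k by simp
  thus ?thesis by simp
qed

lemma db_int: "x + 2 \<le> N \<Longrightarrow>
  int (FF N x) * int (N - x) - 2 * int (GG N x) = int (FF N (x + 1)) * int (x + 1) * int (N - x - 1)"
proof -
  assume a: "x + 2 \<le> N"
  define k where "k = N - x - 2"
  have N: "N = x + k + 2" using a k_def by simp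
  have e: "int (N - x) = int (k + 2)" "int (N - x - 1) = int (k + 1)" using N by simp_all
  show ?thesis unfolding e
    using key_FF[OF N] AA_rec2[of k]
    by (simp add: algebra_simps)
qed

lemma diff_int: "x + 2 \<le> N \<Longrightarrow> \<bar>int (FF N x) - 2 * int (GG N x)\<bar> = int (N choose x) * int (N - x - 1)"
proof -
  assume a: "x + 2 \<le> N"
  define k where "k = N - x - 2"
  have N: "N = x + k + 2" using a k_def by simp
  have e: "int (N - x - 1) = int (k + 1)" using N by simp
  have "int (FF N x) - 2 * int (GG N x) = int (N choose x) * (AA (Suc (Suc k)) - int (Suc (Suc k)) * int (Suc k) * AA k)"
    using key_FF[OF N] by (simp add: algebra_simps)
  also have "\<dots> = int (N choose x) * ((-1) ^ Suc k * int (Suc k))" unfolding AA_diff ..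
  finally show ?thesis unfolding e by (simp add: abs_mult)
qed

lemma up_int: "x + 2 \<le> N \<Longrightarrow> 2 * int (GG N x) \<le> int (N - x) * int (FF N x)"
proof -
  assume a: "x + 2 \<le> N"
  define k where "k = N - x - 2"
  have N: "N = x + k + 2" using a k_def by simp
  have e: "int (N - x) = int (k + 2)" using N by simp
  have "int (k + 1) * AA k \<le> AA (k + 2)"
    using AA_rec2[of k] AA_nonneg[of "Suc k"] by (simp add: algebra_simps)
  hence "int (N choose x) * int (k + 2) * (int (k + 1) * AA k) \<le> int (N choose x) * int (k + 2) * AA (k + 2)"
    by (intro mult_left_mono) auto
  thus ?thesis unfolding e using key_FF[OF N] by (simp add: algebra_simps)
qed

lemma FF0_ge: "N \<ge> 2 \<Longrightarrow> real (FF N 0) \<ge> fact (N - 1)"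
proof -
  assume a: "N \<ge> 2"
  have N: "N = 0 + (N - 2) + 2" using a by simp
  have "int (FF N 0) = AA (N - 2 + 2)" using key_FF(1)[OF N] by simp
  also have "AA (N - 2 + 2) \<ge> fact (Suc (N - 2))" using AA_ge[of "N - 2"] by (simp add: numeral_2_eq_2)
  finally have "int (FF N 0) \<ge> fact (N - 1)" using a by (simp add: Suc_diff_Suc numeral_2_eq_2)
  hence "real_of_int (int (FF N 0)) \<ge> real_of_int (fact (N - 1))" by linarith
  thus ?thesis by simp
qed


definition Zc :: "nat \<Rightarrow> real" where "Zc N = (\<Sum>y\<le>N - 4. piN N y)"

lemma piN_nonneg: "piN N x \<ge> 0" unfolding piN_eq by simp

lemma Zc_ge: "N \<ge> 5 \<Longrightarrow> Zc N \<ge> 1 / real N"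
proof -
  assume N: "N \<ge> 5"
  have "piN N 0 \<le> Zc N" unfolding Zc_def
    by (rule member_le_sum) (auto simp: piN_nonneg)
  moreover have "piN N 0 \<ge> fact (N - 1) / fact N" unfolding piN_eq
    using FF0_ge[of N] N by (intro divide_right_mono) auto
  moreover have "fact N = real N * fact (N - 1)" using N fact_reduce[of N] by simp
  moreover have "fact (N - 1) / (real N * fact (N - 1)) = 1 / real N" by simp
  ultimately show ?thesis by simp
qed

lemma Zc_pos: "N \<ge> 5 \<Longrightarrow> Zc N > 0"
  using Zc_ge[of N] by (smt (verit) divide_pos_pos of_nat_0_less_iff zero_less_numeral le_less_trans less_le_trans)

lemma checkpi_alt: "checkpi N x = (if x \<le> N - 4 then real (FF N x) / (fact N * Zc N) else 0)"
  unfolding checkpi_def Zc_def piN_eq by simp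

lemma checkpi_nonneg: "N \<ge> 5 \<Longrightarrow> checkpi N x \<ge> 0"
  unfolding checkpi_alt using Zc_pos[of N] by simp

lemma checkpi_sum: "N \<ge> 5 \<Longrightarrow> (\<Sum>x\<le>N - 4. checkpi N x) = 1"
proof -
  assume N: "N \<ge> 5"
  have "(\<Sum>x\<le>N - 4. checkpi N x) = (\<Sum>x\<le>N - 4. piN N x / Zc N)"
    unfolding checkpi_def Zc_def by (rule sum.cong) auto
  also have "\<dots> = Zc N / Zc N" unfolding Zc_def by (rule sum_divide_distrib[symmetric])
  also have "\<dots> = 1" using Zc_pos[OF N] by simp
  finally show ?thesis .
qed

lemma db_real: "x + 2 \<le> N \<Longrightarrow>
  real (FF N x) * (real N - real x) - 2 * real (GG N x) = real (FF N (x + 1)) * real (x + 1) * (real N - real x - 1)"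
proof -
  assume a: "x + 2 \<le> N"
  have "real_of_int (int (FF N x) * int (N - x) - 2 * int (GG N x)) = real_of_int (int (FF N (x + 1)) * int (x + 1) * int (N - x - 1))"
    using db_int[OF a] by simp
  moreover have "real (N - x) = real N - real x" "real (N - x - 1) = real N - real x - 1" using a by (simp_all add: of_nat_diff)
  ultimately show ?thesis by simp
qed

lemma up_real: "x + 2 \<le> N \<Longrightarrow> 2 * pcond N x \<le> real N - real x"
proof -
  assume a: "x + 2 \<le> N"
  have F: "real (FF N x) > 0" using FF_pos[OF a] by simp
  have "real_of_int (2 * int (GG N x)) \<le> real_of_int (int (N - x) * int (FF N x))"
    using up_int[OF a] by linarith
  hence "2 * real (GG N x) \<le> (real N - real x) * real (FF N x)" using a by (simp add: of_nat_diff)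
  thus ?thesis unfolding pcond_eq using F by (simp add: field_simps)
qed

lemma pcond_nonneg: "pcond N x \<ge> 0" unfolding pcond_eq by simp

lemma rate_bounds:
  assumes N: "N \<ge> 5" and x: "x \<le> N - 4"
  shows "down N x \<ge> 0" "upP N x \<ge> 0" "upR N x \<ge> 0" "down N x + upP N x \<le> 1" "down N x + upR N x \<le> 1"
proof -
  have NN: "real N * (real N - 1) > 0" using N by simp
  have xN: "real x \<le> real N - 4" using x N by (simp add: of_nat_diff)
  show "down N x \<ge> 0" unfolding down_def using NN xN by simp
  show "upP N x \<ge> 0"
  proof (cases "x \<le> N - 5")
    case True
    then have "2 * pcond N x \<le> real N - real x" using up_real[of x N] N by simp
    then show ?thesis unfolding upP_def using NN True by simp
  next
    case False then show ?thesis unfolding upP_def by simp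
  qed
  show "upR N x \<ge> 0" unfolding upR_def using NN xN by simp
  have key0: "(real N - real x) * (real x + 1) \<le> real N * (real N - 1)"
    by (rule mult_mono) (use xN in auto)
  hence key: "(real x + 1) * (real N - real x) \<le> real N * (real N - 1)" by (simp add: mult.commute)
  have upb: "upP N x \<le> (real N - real x) / (real N * (real N - 1))"
    unfolding upP_def using NN pcond_nonneg[of N x] xN by (auto simp: divide_right_mono)
  have "down N x + upP N x \<le> (real x * (real N - real x) + (real N - real x)) / (real N * (real N - 1))"
    using upb unfolding down_def by (simp add: add_divide_distrib)
  also have "\<dots> = ((real x + 1) * (real N - real x)) / (real N * (real N - 1))" by (simp add: algebra_simps)
  also have "\<dots> \<le> 1" using key NN by simp
  finally show "down N x + upP N x \<le> 1" .
  have upb': "upR N x \<le> (real N - real x) / (real N * (real N - 1))"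
    unfolding upR_def using NN xN by (auto simp: divide_right_mono)
  have "down N x + upR N x \<le> (real x * (real N - real x) + (real N - real x)) / (real N * (real N - 1))"
    using upb' unfolding down_def by (simp add: add_divide_distrib)
  also have "\<dots> = ((real x + 1) * (real N - real x)) / (real N * (real N - 1))" by (simp add: algebra_simps)
  also have "\<dots> \<le> 1" using key NN by simp
  finally show "down N x + upR N x \<le> 1" .
qed

lemma detailed_balance:
  assumes N: "N \<ge> 5"
  shows "checkpi N x * upP N x = checkpi N (Suc x) * down N (Suc x)"
proof (cases "x \<le> N - 5")
  case True
  have a: "x + 2 \<le> N" using True N by simp
  have F: "real (FF N x) > 0" using FF_pos[OF a] by simp
  have Z: "Zc N > 0" using Zc_pos[OF N] .
  have c1: "checkpi N x = real (FF N x) / (fact N * Zc N)" using True unfolding checkpi_alt by simp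
  have c2: "checkpi N (Suc x) = real (FF N (x + 1)) / (fact N * Zc N)" using True N unfolding checkpi_alt by simp
  have fr: "real (FF N x) * (real N - real x - 2 * (real (GG N x) / real (FF N x))) = real (FF N x) * (real N - real x) - 2 * real (GG N x)"
    using F by (simp add: field_simps)
  have "real (FF N x) * upP N x = real (FF N x) * (real N - real x - 2 * (real (GG N x) / real (FF N x))) / (real N * (real N - 1))"
    unfolding upP_def pcond_eq using True by simp
  also have "\<dots> = (real (FF N x) * (real N - real x) - 2 * real (GG N x)) / (real N * (real N - 1))"
    unfolding fr ..
  also have "\<dots> = real (FF N (x + 1)) * down N (Suc x)"
    unfolding db_real[OF a] down_def by (simp add: field_simps)
  finally have "real (FF N x) * upP N x = real (FF N (x + 1)) * down N (Suc x)" .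
  thus ?thesis unfolding c1 c2 by (simp add: field_simps)
next
  case False
  then have "upP N x = 0" unfolding upP_def by simp
  moreover have "checkpi N (Suc x) = 0" using False N unfolding checkpi_def by simp
  ultimately show ?thesis by simp
qed

lemma gap_sum:
  assumes N: "N \<ge> 5"
  shows "(\<Sum>x\<le>N - 4. checkpi N x * \<bar>upP N x - upR N x\<bar>) \<le> 2 ^ N / fact N"
proof -
  have Z: "Zc N > 0" using Zc_pos[OF N] .
  have NN: "real N * (real N - 1) > 0" using N by simp
  have each: "checkpi N x * \<bar>upP N x - upR N x\<bar> \<le> real (N choose x) / (fact N * Zc N * real N)"
    if x: "x \<le> N - 4" for x
  proof (cases "x \<le> N - 5")
    case True
    have a: "x + 2 \<le> N" using True N by simp
    have F: "real (FF N x) > 0" using FF_pos[OF a] by simp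
    have c1: "checkpi N x = real (FF N x) / (fact N * Zc N)" using True unfolding checkpi_alt by simp
    have fr: "1 - 2 * (real (GG N x) / real (FF N x)) = (real (FF N x) - 2 * real (GG N x)) / real (FF N x)"
      using F by (simp add: field_simps)
    have "upP N x - upR N x = ((real N - real x - 2 * (real (GG N x) / real (FF N x))) - (real N - real x - 1)) / (real N * (real N - 1))"
      unfolding upP_def upR_def pcond_eq using True by (simp add: diff_divide_distrib)
    also have "\<dots> = (1 - 2 * (real (GG N x) / real (FF N x))) / (real N * (real N - 1))" by simp
    also have "\<dots> = (real (FF N x) - 2 * real (GG N x)) / (real (FF N x) * (real N * (real N - 1)))"
      unfolding fr by simp
    finally have d: "upP N x - upR N x = (real (FF N x) - 2 * real (GG N x)) / (real (FF N x) * (real N * (real N - 1)))" .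
    have "\<bar>real (FF N x) - 2 * real (GG N x)\<bar> = real (N choose x) * real (N - x - 1)"
    proof -
      have "real_of_int \<bar>int (FF N x) - 2 * int (GG N x)\<bar> = real_of_int (int (N choose x) * int (N - x - 1))"
        using diff_int[OF a] by simp
      thus ?thesis by simp
    qed
    also have "\<dots> \<le> real (N choose x) * (real N - 1)"
      using a by (intro mult_left_mono) (auto simp: of_nat_diff)
    finally have ab: "\<bar>real (FF N x) - 2 * real (GG N x)\<bar> \<le> real (N choose x) * (real N - 1)" .
    have "checkpi N x * \<bar>upP N x - upR N x\<bar> = \<bar>real (FF N x) - 2 * real (GG N x)\<bar> / (fact N * Zc N * (real N * (real N - 1)))"
    proof -
      have D: "real (FF N x) * (real N * (real N - 1)) > 0" using F NN by simp
      have "\<bar>upP N x - upR N x\<bar> = \<bar>real (FF N x) - 2 * real (GG N x)\<bar> / (real (FF N x) * (real N * (real N - 1)))"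
        unfolding d abs_divide using D by simp
      have gen: "F \<noteq> 0 \<Longrightarrow> F / P * (A / (F * D)) = A / (P * D)" for F P A D :: real
        by (cases "P = 0"; cases "D = 0") (simp_all add: field_simps)
      show ?thesis unfolding c1 \<open>\<bar>upP N x - upR N x\<bar> = _\<close>
        using gen[of "real (FF N x)" "fact N * Zc N"] F by (simp add: mult.assoc)
    qed
    also have "\<dots> \<le> real (N choose x) * (real N - 1) / (fact N * Zc N * (real N * (real N - 1)))"
      using ab Z NN by (intro divide_right_mono) auto
    also have "\<dots> = real (N choose x) / (fact N * Zc N * real N)"
    proof -
      have gen: "r \<noteq> 0 \<Longrightarrow> c * r / (P * (n * r)) = c / (P * n)" for c r P n :: real
        by (cases "P = 0"; cases "n = 0") (simp_all add: field_simps)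
      have "real N - 1 \<noteq> 0" using N by simp
      from gen[OF this] show ?thesis by simp
    qed
    finally show ?thesis .
  next
    case False
    then have "upP N x = 0" "upR N x = 0" unfolding upP_def upR_def by simp_all
    then show ?thesis using Z N by simp
  qed
  have "(\<Sum>x\<le>N - 4. checkpi N x * \<bar>upP N x - upR N x\<bar>) \<le> (\<Sum>x\<le>N - 4. real (N choose x) / (fact N * Zc N * real N))"
    by (rule sum_mono) (use each in auto)
  also have "\<dots> = (\<Sum>x\<le>N - 4. real (N choose x)) / (fact N * Zc N * real N)"
    by (simp add: sum_divide_distrib)
  also have "(\<Sum>x\<le>N - 4. real (N choose x)) \<le> (\<Sum>x\<le>N. real (N choose x))"
    by (rule sum_mono2) auto
  also have "(\<Sum>x\<le>N. real (N choose x)) = 2 ^ N"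
    using choose_row_sum[of N] by (metis of_nat_numeral of_nat_power of_nat_sum)
  finally have s: "(\<Sum>x\<le>N - 4. checkpi N x * \<bar>upP N x - upR N x\<bar>) \<le> 2 ^ N / (fact N * Zc N * real N)"
    using Z N by (simp add: divide_right_mono)
  have "Zc N * real N \<ge> 1" using Zc_ge[OF N] N by (simp add: field_simps)
  hence "2 ^ N / (fact N * Zc N * real N) \<le> 2 ^ N / fact N"
    using Z N by (simp add: divide_left_mono frac_le mult.assoc)
  with s show ?thesis by linarith
qed



lemma step_meas: "(\<lambda>u. step dn up y u) \<in> measurable borel (count_space UNIV)"
  unfolding step_def by measurable

lemma chain_cong: "(\<And>j. j < k \<Longrightarrow> u j = v j) \<Longrightarrow> chain dn up x0 u k = chain dn up x0 v k"
  by (induction k) auto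

lemma step_le: "step dn up y u \<le> Suc y" unfolding step_def by auto

lemma chain_le: "chain dn up x0 u k \<le> x0 + k"
proof (induction k)
  case 0 then show ?case by simp
next
  case (Suc k) then show ?case using step_le[of dn up "chain dn up x0 u k" "u k"] by simp
qed

lemma chain_meas:
  "{..<k} \<subseteq> I \<Longrightarrow> (\<lambda>f. chain dn up x0 f k) \<in> measurable (PiM I (\<lambda>_. borel)) (count_space UNIV)"
proof (induction k)
  case 0 then show ?case by simp
next
  case (Suc k)
  have kI: "k \<in> I" using Suc.prems by auto
  have IH: "(\<lambda>f. chain dn up x0 f k) \<in> measurable (PiM I (\<lambda>_. borel)) (count_space UNIV)"
    using Suc.IH Suc.prems by (meson lessThan_subset_iff le_SucI order_refl subset_trans)
  have comp: "(\<lambda>f. step dn up z (f k)) \<in> measurable (PiM I (\<lambda>_. borel)) (count_space UNIV)" for z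
    by (rule measurable_compose[OF measurable_component_singleton[OF kI] step_meas])
  show ?case
    using measurable_compose_countable[where f="\<lambda>z f. step dn up z (f k)", OF comp IH] by simp
qed


lemma step_alt:
  "step dn up y u = (if u < dn y then y - 1 else if u < 1 - up y then y else y + 1)"
  unfolding step_def stay_def by simp

lemma Kt_eq:
  assumes a0: "0 \<le> dn y" and u0: "0 \<le> up y" and s1: "dn y + up y \<le> 1" and z: "y = 0 \<Longrightarrow> dn y = 0"
  shows "measure lborel ({0..1} \<inter> {u. step dn up y u = x})
     = (if Suc x = y then dn y else 0) + (if x = y then stay dn up y else 0) + (if x = Suc y then up y else 0)"
proof -
  define a where "a = dn y"
  define b where "b = 1 - up y"
  have ab: "0 \<le> a" "a \<le> b" "b \<le> 1" using a0 u0 s1 unfolding a_def b_def by auto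
  have st: "\<And>u. step dn up y u = (if u < a then y - 1 else if u < b then y else y + 1)"
    unfolding a_def b_def by (rule step_alt)
  show ?thesis
  proof (cases "Suc x = y")
    case True
    have "{0..1} \<inter> {u. step dn up y u = x} = {0..<a}"
      using True ab unfolding st by auto
    then show ?thesis using True ab unfolding a_def by simp
  next
    case F1: False
    show ?thesis
    proof (cases "x = y")
      case True
      have "{0..1} \<inter> {u. step dn up y u = x} = {a..<b}"
      proof (cases "y = 0")
        case True
        then have "a = 0" using z unfolding a_def by simp
        then show ?thesis using True \<open>x = y\<close> ab unfolding st by auto
      next
        case False
        then show ?thesis using \<open>x = y\<close> ab unfolding st by auto
      qed
      then show ?thesis using True F1 ab unfolding a_def b_def stay_def by simp
    next
      case F2: False
      show ?thesis
      proof (cases "x = Suc y")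
        case True
        have "{0..1} \<inter> {u. step dn up y u = x} = {b..1}"
          using True ab unfolding st by auto
        then show ?thesis using True ab unfolding b_def by simp
      next
        case False
        have "{0..1} \<inter> {u. step dn up y u = x} = {}"
          using False F1 F2 unfolding st by auto
        then show ?thesis using False F1 F2 by simp
      qed
    qed
  qed
qed

definition Jgap :: "(nat \<Rightarrow> real) \<Rightarrow> (nat \<Rightarrow> real) \<Rightarrow> nat \<Rightarrow> real set" where
  "Jgap upA upB y = {min (1 - upA y) (1 - upB y) ..< max (1 - upA y) (1 - upB y)}"

lemma Jgap_cover: "step dn upA y u \<noteq> step dn upB y u \<Longrightarrow> u \<in> Jgap upA upB y"
  unfolding Jgap_def step_alt by (auto split: if_splits)

lemma Jgap_sets: "Jgap upA upB y \<in> sets borel" unfolding Jgap_def by simp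

lemma Jgap_meas: "measure lborel ({0..1} \<inter> Jgap upA upB y) \<le> \<bar>upA y - upB y\<bar>"
proof -
  let ?c = "min (1 - upA y) (1 - upB y)" and ?d = "max (1 - upA y) (1 - upB y)"
  have "measure lborel ({0..1} \<inter> Jgap upA upB y) \<le> measure lborel {?c..?d}"
    by (rule measure_mono_fmeasurable) (auto simp: Jgap_def intro: fmeasurable_compact)
  also have "\<dots> = ?d - ?c" by simp
  also have "\<dots> = \<bar>upA y - upB y\<bar>" by (simp add: max_def min_def)
  finally show ?thesis .
qed

definition Kf :: "(nat \<Rightarrow> real) \<Rightarrow> (nat \<Rightarrow> real) \<Rightarrow> nat \<Rightarrow> nat \<Rightarrow> real" where
  "Kf dn up y x = (if Suc x = y then dn y else 0) + (if x = y then stay dn up y else 0) + (if x = Suc y then up y else 0)"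

lemma stat_generic:
  fixes pi dn up :: "nat \<Rightarrow> real"
  assumes DB: "\<And>x. pi x * up x = pi (Suc x) * dn (Suc x)"
    and zero: "\<And>y. y > L \<Longrightarrow> pi y = 0" and LM: "L \<le> Mb" and d0: "dn 0 = 0"
  shows "(\<Sum>y\<le>Mb. pi y * Kf dn up y x) = pi x"
proof -
  have "(\<Sum>y\<le>Mb. pi y * Kf dn up y x)
      = (\<Sum>y\<le>Mb. if Suc x = y then pi y * dn y else 0) + (\<Sum>y\<le>Mb. if x = y then pi y * stay dn up y else 0)
        + (\<Sum>y\<le>Mb. if x = Suc y then pi y * up y else 0)"
    unfolding Kf_def sum.distrib[symmetric] by (rule sum.cong) (auto simp: algebra_simps)
  also have "(\<Sum>y\<le>Mb. if Suc x = y then pi y * dn y else 0) = pi x * up x"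
  proof (cases "Suc x \<le> Mb")
    case True then show ?thesis using DB[of x] by (simp add: sum.delta)
  next
    case False then have "pi (Suc x) = 0" using zero LM by simp
    then show ?thesis using False DB[of x] by (simp add: sum.delta)
  qed
  also have "(\<Sum>y\<le>Mb. if x = y then pi y * stay dn up y else 0) = pi x * stay dn up x"
  proof (cases "x \<le> Mb")
    case True then show ?thesis by (simp add: sum.delta)
  next
    case False then have "pi x = 0" using zero LM by simp
    then show ?thesis using False by (simp add: sum.delta)
  qed
  also have "(\<Sum>y\<le>Mb. if x = Suc y then pi y * up y else 0) = pi x * dn x"
  proof (cases x)
    case 0 then show ?thesis using d0 by simp
  next
    case (Suc z)
    have "(\<Sum>y\<le>Mb. if x = Suc y then pi y * up y else 0) = (\<Sum>y\<le>Mb. if z = y then pi y * up y else 0)"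
      using Suc by (intro sum.cong) auto
    also have "\<dots> = pi x * dn x"
    proof (cases "z \<le> Mb")
      case True then show ?thesis using DB[of z] Suc by (simp add: sum.delta)
    next
      case False then have "pi z = 0" "pi x = 0" using zero LM Suc by simp_all
      then show ?thesis using False by (simp add: sum.delta)
    qed
    finally show ?thesis .
  qed
  finally show ?thesis unfolding stay_def by (simp add: algebra_simps)
qed

locale unifseq = prob_space M for M :: "'a measure" +
  fixes U :: "nat \<Rightarrow> 'a \<Rightarrow> real"
  assumes indep: "indep_vars (\<lambda>_. borel) U UNIV"
    and unif: "\<And>k. distr M lborel (U k) = uniform_measure lborel {0..1}"
begin

lemma U_meas[measurable]: "U k \<in> borel_measurable M"
  using indep unfolding indep_vars_def by auto

lemma R_meas: "(\<lambda>\<omega>. restrict (\<lambda>j. U j \<omega>) I) \<in> measurable M (PiM I (\<lambda>_. borel))"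
  by (rule measurable_restrict) simp

lemma Uv_meas: "(\<lambda>\<omega> j. U j \<omega>) \<in> measurable M (PiM UNIV (\<lambda>_. borel))"
  by (rule measurable_PiM_single') auto

lemma probU: "B \<in> sets borel \<Longrightarrow> prob {\<omega> \<in> space M. U k \<omega> \<in> B} = measure lborel ({0..1} \<inter> B)"
proof -
  assume B: "B \<in> sets borel"
  have "prob {\<omega> \<in> space M. U k \<omega> \<in> B} = prob (U k -` B \<inter> space M)"
    by (rule arg_cong[where f=prob]) auto
  also have "\<dots> = measure (distr M lborel (U k)) B"
    using B by (subst measure_distr) auto
  also have "\<dots> = measure (uniform_measure lborel {0..1}) B" unfolding unif ..
  also have "\<dots> = measure lborel ({0..1} \<inter> B) / measure lborel {0..1::real}"
    using B by (subst measure_uniform_measure) auto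
  finally show ?thesis by simp
qed

lemma indep_past:
  assumes A: "A \<in> sets (PiM {..<k} (\<lambda>_. borel))" and B: "B \<in> sets borel"
  shows "prob {\<omega> \<in> space M. restrict (\<lambda>j. U j \<omega>) {..<k} \<in> A \<and> U k \<omega> \<in> B}
       = prob {\<omega> \<in> space M. restrict (\<lambda>j. U j \<omega>) {..<k} \<in> A} * prob {\<omega> \<in> space M. U k \<omega> \<in> B}"
proof -
  let ?R1 = "\<lambda>\<omega>. restrict (\<lambda>j. U j \<omega>) {..<k}"
  let ?R2 = "\<lambda>\<omega>. restrict (\<lambda>j. U j \<omega>) {k}"
  have iv: "indep_var (PiM {..<k} (\<lambda>_. borel)) ?R1 (PiM {k} (\<lambda>_. borel)) ?R2"
    by (rule indep_var_restrict[OF indep]) auto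
  define Xb where "Xb = (\<lambda>f. f k) -` B \<inter> space (PiM {k} (\<lambda>_. borel :: real measure))"
  have Xb: "Xb \<in> sets (PiM {k} (\<lambda>_. borel))"
  proof -
    have cm: "(\<lambda>f. f k) \<in> measurable (PiM {k} (\<lambda>_. borel)) (borel :: real measure)"
      by (rule measurable_component_singleton) simp
    show ?thesis unfolding Xb_def by (rule measurable_sets[OF cm B])
  qed
  have "prob ((\<lambda>x. (?R1 x, ?R2 x)) -` (A \<times> Xb) \<inter> space M) = prob (?R1 -` A \<inter> space M) * prob (?R2 -` Xb \<inter> space M)"
    by (rule indep_varD[OF iv A Xb])
  moreover have "(\<lambda>x. (?R1 x, ?R2 x)) -` (A \<times> Xb) \<inter> space M = {\<omega> \<in> space M. ?R1 \<omega> \<in> A \<and> U k \<omega> \<in> B}"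
    unfolding Xb_def by (auto simp: space_PiM)
  moreover have "?R1 -` A \<inter> space M = {\<omega> \<in> space M. ?R1 \<omega> \<in> A}" by auto
  moreover have "?R2 -` Xb \<inter> space M = {\<omega> \<in> space M. U k \<omega> \<in> B}"
    unfolding Xb_def by (auto simp: space_PiM)
  ultimately show ?thesis by simp
qed

definition Ach :: "(nat \<Rightarrow> real) \<Rightarrow> (nat \<Rightarrow> real) \<Rightarrow> nat \<Rightarrow> nat \<Rightarrow> nat \<Rightarrow> (nat \<Rightarrow> real) set" where
  "Ach dn up x0 k y = {f \<in> space (PiM {..<k} (\<lambda>_. borel :: real measure)). chain dn up x0 f k = y}"

lemma Ach_sets: "Ach dn up x0 k y \<in> sets (PiM {..<k} (\<lambda>_. borel))"
proof -
  have "(\<lambda>f. chain dn up x0 f k) -` {y} \<inter> space (PiM {..<k} (\<lambda>_. borel :: real measure)) \<in> sets (PiM {..<k} (\<lambda>_. borel))"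
    by (rule measurable_sets[OF chain_meas]) auto
  moreover have "(\<lambda>f. chain dn up x0 f k) -` {y} \<inter> space (PiM {..<k} (\<lambda>_. borel :: real measure)) = Ach dn up x0 k y"
    unfolding Ach_def by auto
  ultimately show ?thesis by simp
qed

lemma chain_event: "{\<omega> \<in> space M. chain dn up x0 (\<lambda>j. U j \<omega>) k = y}
   = {\<omega> \<in> space M. restrict (\<lambda>j. U j \<omega>) {..<k} \<in> Ach dn up x0 k y}"
proof -
  have "chain dn up x0 (restrict (\<lambda>j. U j \<omega>) {..<k}) k = chain dn up x0 (\<lambda>j. U j \<omega>) k" for \<omega>
    by (rule chain_cong) simp
  thus ?thesis unfolding Ach_def by (auto simp: space_PiM)
qed

definition pk :: "(nat \<Rightarrow> real) \<Rightarrow> (nat \<Rightarrow> real) \<Rightarrow> nat \<Rightarrow> nat \<Rightarrow> nat \<Rightarrow> real" where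
  "pk dn up x0 k y = prob {\<omega> \<in> space M. chain dn up x0 (\<lambda>j. U j \<omega>) k = y}"

lemma stepset_sets: "{u. step dn up y u = x} \<in> sets borel"
proof -
  have "(\<lambda>u. step dn up y u) -` {x} \<inter> space borel \<in> sets borel"
    by (rule measurable_sets[OF step_meas]) auto
  thus ?thesis by (simp add: vimage_def)
qed

lemma event_RU: "A \<in> sets (PiM I (\<lambda>_. borel)) \<Longrightarrow> B \<in> sets borel \<Longrightarrow>
   {\<omega> \<in> space M. restrict (\<lambda>j. U j \<omega>) I \<in> A \<and> U k \<omega> \<in> B} \<in> events"
proof -
  assume A: "A \<in> sets (PiM I (\<lambda>_. borel))" and B: "B \<in> sets borel"
  have "(\<lambda>\<omega>. restrict (\<lambda>j. U j \<omega>) I) -` A \<inter> space M \<in> events" by (rule measurable_sets[OF R_meas A])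
  moreover have "U k -` B \<inter> space M \<in> events" by (rule measurable_sets[OF U_meas B])
  ultimately have "((\<lambda>\<omega>. restrict (\<lambda>j. U j \<omega>) I) -` A \<inter> space M) \<inter> (U k -` B \<inter> space M) \<in> events" by auto
  moreover have "((\<lambda>\<omega>. restrict (\<lambda>j. U j \<omega>) I) -` A \<inter> space M) \<inter> (U k -` B \<inter> space M)
     = {\<omega> \<in> space M. restrict (\<lambda>j. U j \<omega>) I \<in> A \<and> U k \<omega> \<in> B}" by auto
  ultimately show ?thesis by simp
qed

lemma event_R: "A \<in> sets (PiM I (\<lambda>_. borel)) \<Longrightarrow> {\<omega> \<in> space M. restrict (\<lambda>j. U j \<omega>) I \<in> A} \<in> events"
proof -
  assume A: "A \<in> sets (PiM I (\<lambda>_. borel))"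
  have "(\<lambda>\<omega>. restrict (\<lambda>j. U j \<omega>) I) -` A \<inter> space M \<in> events" by (rule measurable_sets[OF R_meas A])
  moreover have "(\<lambda>\<omega>. restrict (\<lambda>j. U j \<omega>) I) -` A \<inter> space M = {\<omega> \<in> space M. restrict (\<lambda>j. U j \<omega>) I \<in> A}" by auto
  ultimately show ?thesis by simp
qed

lemma p_rec:
  assumes Mb: "x0 + k \<le> Mb"
  shows "pk dn up x0 (Suc k) x = (\<Sum>y\<le>Mb. pk dn up x0 k y * measure lborel ({0..1} \<inter> {u. step dn up y u = x}))"
proof -
  let ?F = "\<lambda>y. {\<omega> \<in> space M. restrict (\<lambda>j. U j \<omega>) {..<k} \<in> Ach dn up x0 k y \<and> U k \<omega> \<in> {u. step dn up y u = x}}"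
  have eq: "{\<omega> \<in> space M. chain dn up x0 (\<lambda>j. U j \<omega>) (Suc k) = x} = (\<Union>y\<in>{..Mb}. ?F y)"
  proof -
    have "chain dn up x0 (\<lambda>j. U j \<omega>) k \<le> Mb" for \<omega> using chain_le[of dn up x0 _ k] Mb by (meson order_trans)
    moreover have "restrict (\<lambda>j. U j \<omega>) {..<k} \<in> Ach dn up x0 k y \<longleftrightarrow> chain dn up x0 (\<lambda>j. U j \<omega>) k = y"
      if "\<omega> \<in> space M" for \<omega> y
      using chain_event[of dn up x0 k y] that by blast
    ultimately show ?thesis by auto
  qed
  have disj: "disjoint_family_on ?F {..Mb}"
    unfolding disjoint_family_on_def Ach_def by auto
  have sets: "?F ` {..Mb} \<subseteq> events"
    using event_RU[OF Ach_sets stepset_sets] by auto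
  have "pk dn up x0 (Suc k) x = (\<Sum>y\<le>Mb. prob (?F y))"
    unfolding pk_def eq by (rule finite_measure_finite_Union[OF _ sets disj]) simp
  also have "\<dots> = (\<Sum>y\<le>Mb. pk dn up x0 k y * measure lborel ({0..1} \<inter> {u. step dn up y u = x}))"
  proof (rule sum.cong)
    fix y assume "y \<in> {..Mb}"
    have "prob (?F y) = prob {\<omega> \<in> space M. restrict (\<lambda>j. U j \<omega>) {..<k} \<in> Ach dn up x0 k y} * prob {\<omega> \<in> space M. U k \<omega> \<in> {u. step dn up y u = x}}"
      by (rule indep_past[OF Ach_sets stepset_sets])
    also have "\<dots> = pk dn up x0 k y * measure lborel ({0..1} \<inter> {u. step dn up y u = x})"
      unfolding pk_def chain_event probU[OF stepset_sets] ..
    finally show "prob (?F y) = pk dn up x0 k y * measure lborel ({0..1} \<inter> {u. step dn up y u = x})" .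
  qed simp
  finally show ?thesis .
qed

lemma pk_0: "pk dn up x0 0 y = (if y = x0 then 1 else 0)"
  unfolding pk_def using prob_space by simp

end



lemma zeta_sum: "N \<ge> 5 \<Longrightarrow> (\<Sum>x\<le>N - 4. zeta N x) = 1"
proof -
  assume N: "N \<ge> 5"
  let ?D = "(\<Sum>y\<le>N - 4. exp (-1) / fact y :: real)"
  have "?D \<ge> exp (-1) / fact 0"
    by (rule member_le_sum) auto
  hence D: "?D > 0" by (smt (verit) exp_gt_zero fact_0 div_by_1)
  have "(\<Sum>x\<le>N - 4. zeta N x) = (\<Sum>x\<le>N - 4. (exp (-1) / fact x) / ?D)"
    unfolding zeta_def by (rule sum.cong) auto
  also have "\<dots> = ?D / ?D" by (rule sum_divide_distrib[symmetric])
  finally show ?thesis using D by simp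
qed

lemma zeta_nonneg: "zeta N x \<ge> 0"
proof -
  have "(\<Sum>y\<le>N - 4. exp (-1) / fact y :: real) \<ge> 0" by (intro sum_nonneg) auto
  thus ?thesis unfolding zeta_def by auto
qed

context prob_space
begin

lemma law_out:
  assumes X: "X \<in> measurable M (count_space UNIV)" and law: "\<And>x. prob {\<omega> \<in> space M. X \<omega> = x} = f x"
    and S: "finite S" and sum1: "(\<Sum>x\<in>S. f x) = 1"
  shows "prob {\<omega> \<in> space M. X \<omega> \<notin> S} = 0"
proof -
  have ev: "{\<omega> \<in> space M. X \<omega> = x} \<in> events" for x
    using measurable_sets[OF X, of "{x}"] by (simp add: vimage_def Int_def conj_commute)
  have "{\<omega> \<in> space M. X \<omega> \<in> S} = (\<Union>x\<in>S. {\<omega> \<in> space M. X \<omega> = x})" by auto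
  hence "prob {\<omega> \<in> space M. X \<omega> \<in> S} = (\<Sum>x\<in>S. prob {\<omega> \<in> space M. X \<omega> = x})"
    using finite_measure_finite_Union[OF S, of "\<lambda>x. {\<omega> \<in> space M. X \<omega> = x}"] ev
    by (auto simp: disjoint_family_on_def)
  also have "\<dots> = 1" using law sum1 by simp
  finally have p1: "prob {\<omega> \<in> space M. X \<omega> \<in> S} = 1" .
  have evS: "{\<omega> \<in> space M. X \<omega> \<in> S} \<in> events"
    using measurable_sets[OF X, of S] by (simp add: vimage_def Int_def conj_commute)
  have "{\<omega> \<in> space M. X \<omega> \<notin> S} = space M - {\<omega> \<in> space M. X \<omega> \<in> S}" by auto
  thus ?thesis using prob_compl[OF evS] p1 by simp
qed

lemma union_bound:
  assumes "finite I" "\<And>i. i \<in> I \<Longrightarrow> A i \<in> events"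
  shows "prob (\<Union>i\<in>I. A i) \<le> (\<Sum>i\<in>I. prob (A i))"
  using finite_measure_subadditive_finite[of I A] assms by auto

end


lemma space_PiM_UNIV: "space (PiM UNIV (\<lambda>_. borel :: real measure)) = UNIV"
  by (auto simp: space_PiM PiE_def extensional_def)

theorem lemma5p4:
  fixes N n :: nat
    and M :: "'a measure"
    and X0 Y0 :: "'a \<Rightarrow> nat"
    and U :: "nat \<Rightarrow> 'a \<Rightarrow> real"
  assumes N5: "N \<ge> 5"
    and P: "prob_space M"
    and X0_meas: "X0 \<in> measurable M (count_space UNIV)"
    and Y0_meas: "Y0 \<in> measurable M (count_space UNIV)"
    and X0_law: "\<And>x. measure M {\<omega> \<in> space M. X0 \<omega> = x} = checkpi N x"
    and Y0_law: "\<And>y. measure M {\<omega> \<in> space M. Y0 \<omega> = y} = zeta N y"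
    and U_unif: "\<And>k. distr M lborel (U k) = uniform_measure lborel {0..1}"
    and U_indep: "prob_space.indep_vars M (\<lambda>_. borel) U UNIV"
    and init_indep: "\<And>x y A. A \<in> sets (PiM UNIV (\<lambda>_. borel)) \<Longrightarrow>
        measure M {\<omega> \<in> space M. X0 \<omega> = x \<and> Y0 \<omega> = y \<and> (\<lambda>k. U k \<omega>) \<in> A}
        = measure M {\<omega> \<in> space M. X0 \<omega> = x \<and> Y0 \<omega> = y}
          * measure M {\<omega> \<in> space M. (\<lambda>k. U k \<omega>) \<in> A}"
  shows "measure M {\<omega> \<in> space M. 0 < Zcount N (X0 \<omega>) (Y0 \<omega>) (\<lambda>k. U k \<omega>) n}
           \<le> 2 ^ N * real n / fact N"
proof -
  interpret unifseq M U
    by (intro unifseq.intro unifseq_axioms.intro P U_indep U_unif)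
  define S where "S = {..N - 4}"
  define Mx where "Mx = N - 4 + n"
  define g where "g x = \<bar>upP N x - upR N x\<bar>" for x
  have finS: "finite S" unfolding S_def by simp
  have evX: "{\<omega> \<in> space M. X0 \<omega> = x} \<in> events" for x
    using measurable_sets[OF X0_meas, of "{x}"] by (simp add: vimage_def Int_def conj_commute)
  have evY: "{\<omega> \<in> space M. Y0 \<omega> = x} \<in> events" for x
    using measurable_sets[OF Y0_meas, of "{x}"] by (simp add: vimage_def Int_def conj_commute)
  have evXS: "{\<omega> \<in> space M. X0 \<omega> \<notin> S} \<in> events"
    using measurable_sets[OF X0_meas, of "-S"] by (simp add: vimage_def Int_def conj_commute)
  have evYS: "{\<omega> \<in> space M. Y0 \<omega> \<notin> S} \<in> events"
    using measurable_sets[OF Y0_meas, of "-S"] by (simp add: vimage_def Int_def conj_commute)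
  have bX: "prob {\<omega> \<in> space M. X0 \<omega> \<notin> S} = 0"
    by (rule law_out[OF X0_meas X0_law finS]) (simp add: S_def checkpi_sum N5)
  have bY: "prob {\<omega> \<in> space M. Y0 \<omega> \<notin> S} = 0"
    by (rule law_out[OF Y0_meas Y0_law finS]) (simp add: S_def zeta_sum N5)
  have cp0: "y > N - 4 \<Longrightarrow> checkpi N y = 0" for y unfolding checkpi_def by simp
  have stat: "(\<Sum>x0\<in>S. checkpi N x0 * pk (down N) (upP N) x0 k x) = checkpi N x" for k x
  proof (induction k arbitrary: x)
    case 0
    have "(\<Sum>x0\<in>S. checkpi N x0 * pk (down N) (upP N) x0 0 x) = (\<Sum>x0\<in>S. if x0 = x then checkpi N x0 else 0)"
      by (rule sum.cong) (auto simp: pk_0)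
    also have "\<dots> = (if x \<in> S then checkpi N x else 0)" using finS by (simp add: sum.delta)
    also have "\<dots> = checkpi N x" using cp0[of x] by (auto simp: S_def)
    finally show ?case .
  next
    case (Suc k)
    define Mb where "Mb = N - 4 + k"
    define Kt where "Kt y = measure lborel ({0..1} \<inter> {u. step (down N) (upP N) y u = x})" for y
    have rec: "pk (down N) (upP N) x0 (Suc k) x = (\<Sum>y\<le>Mb. pk (down N) (upP N) x0 k y * Kt y)" if "x0 \<in> S" for x0
      unfolding Kt_def by (rule p_rec) (use that in \<open>auto simp: S_def Mb_def\<close>)
    have "(\<Sum>x0\<in>S. checkpi N x0 * pk (down N) (upP N) x0 (Suc k) x)
        = (\<Sum>x0\<in>S. \<Sum>y\<le>Mb. checkpi N x0 * pk (down N) (upP N) x0 k y * Kt y)"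
      by (rule sum.cong) (auto simp: rec sum_distrib_left mult.assoc)
    also have "\<dots> = (\<Sum>y\<le>Mb. (\<Sum>x0\<in>S. checkpi N x0 * pk (down N) (upP N) x0 k y) * Kt y)"
      by (subst sum.swap) (simp add: sum_distrib_right)
    also have "\<dots> = (\<Sum>y\<le>Mb. checkpi N y * Kt y)" using Suc.IH by simp
    also have "\<dots> = (\<Sum>y\<le>Mb. checkpi N y * Kf (down N) (upP N) y x)"
    proof (rule sum.cong)
      fix y assume "y \<in> {..Mb}"
      show "checkpi N y * Kt y = checkpi N y * Kf (down N) (upP N) y x"
      proof (cases "y \<le> N - 4")
        case True
        have "Kt y = Kf (down N) (upP N) y x"
          unfolding Kt_def Kf_def
          by (rule Kt_eq) (use rate_bounds[OF N5 True] in \<open>auto simp: down_def\<close>)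
        then show ?thesis by simp
      next
        case False then show ?thesis using cp0[of y] by simp
      qed
    qed simp
    also have "\<dots> = checkpi N x"
      by (rule stat_generic[where L="N - 4"]) (auto simp: detailed_balance[OF N5] cp0 Mb_def down_def)
    finally show ?case .
  qed
  define A where "A k x0 y0 x = {u. chain (down N) (upP N) x0 u k = x \<and> chain (down N) (upR N) y0 u k = x
      \<and> u k \<in> Jgap (upP N) (upR N) x}" for k x0 y0 x
  have A_sets: "A k x0 y0 x \<in> sets (PiM UNIV (\<lambda>_. borel))" for k x0 y0 x
  proof -
    let ?sp = "space (PiM UNIV (\<lambda>_. borel :: real measure))"
    have m1: "(\<lambda>u. chain (down N) (upP N) x0 u k) -` {x} \<inter> ?sp \<in> sets (PiM UNIV (\<lambda>_. borel))"
      by (rule measurable_sets[OF chain_meas]) auto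
    have m2: "(\<lambda>u. chain (down N) (upR N) y0 u k) -` {x} \<inter> ?sp \<in> sets (PiM UNIV (\<lambda>_. borel))"
      by (rule measurable_sets[OF chain_meas]) auto
    have cm: "(\<lambda>f. f k) \<in> measurable (PiM UNIV (\<lambda>_. borel)) (borel :: real measure)"
      by (rule measurable_component_singleton) simp
    have m3: "(\<lambda>u. u k) -` Jgap (upP N) (upR N) x \<inter> ?sp \<in> sets (PiM UNIV (\<lambda>_. borel))"
      by (rule measurable_sets[OF cm Jgap_sets])
    have "A k x0 y0 x = ((\<lambda>u. chain (down N) (upP N) x0 u k) -` {x} \<inter> ?sp) \<inter> ((\<lambda>u. chain (down N) (upR N) y0 u k) -` {x} \<inter> ?sp)
        \<inter> ((\<lambda>u. u k) -` Jgap (upP N) (upR N) x \<inter> ?sp)"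
      unfolding A_def space_PiM_UNIV by auto
    then show ?thesis using m1 m2 m3 by auto
  qed
  define E where "E k x0 y0 x = {\<omega> \<in> space M. X0 \<omega> = x0 \<and> Y0 \<omega> = y0 \<and> (\<lambda>j. U j \<omega>) \<in> A k x0 y0 x}" for k x0 y0 x
  have E_ev: "E k x0 y0 x \<in> events" for k x0 y0 x
  proof -
    have "(\<lambda>\<omega> j. U j \<omega>) -` A k x0 y0 x \<inter> space M \<in> events" by (rule measurable_sets[OF Uv_meas A_sets])
    moreover have "E k x0 y0 x = {\<omega> \<in> space M. X0 \<omega> = x0} \<inter> {\<omega> \<in> space M. Y0 \<omega> = y0} \<inter> ((\<lambda>\<omega> j. U j \<omega>) -` A k x0 y0 x \<inter> space M)"
      unfolding E_def by auto
    ultimately show ?thesis using evX evY by auto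
  qed
  define q where "q x0 y0 = prob {\<omega> \<in> space M. X0 \<omega> = x0 \<and> Y0 \<omega> = y0}" for x0 y0
  have E_bound: "prob (E k x0 y0 x) \<le> q x0 y0 * (pk (down N) (upP N) x0 k x * g x)" for k x0 y0 x
  proof -
    let ?J = "Jgap (upP N) (upR N) x"
    let ?B = "{\<omega> \<in> space M. restrict (\<lambda>j. U j \<omega>) {..<k} \<in> Ach (down N) (upP N) x0 k x \<and> U k \<omega> \<in> ?J}"
    have e1: "prob (E k x0 y0 x) = q x0 y0 * prob {\<omega> \<in> space M. (\<lambda>j. U j \<omega>) \<in> A k x0 y0 x}"
      unfolding E_def q_def by (rule init_indep[OF A_sets])
    have sub: "{\<omega> \<in> space M. (\<lambda>j. U j \<omega>) \<in> A k x0 y0 x} \<subseteq> ?B"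
    proof (rule subsetI)
      fix \<omega> assume "\<omega> \<in> {\<omega> \<in> space M. (\<lambda>j. U j \<omega>) \<in> A k x0 y0 x}"
      then have sp: "\<omega> \<in> space M" and c: "chain (down N) (upP N) x0 (\<lambda>j. U j \<omega>) k = x" and J: "U k \<omega> \<in> ?J"
        unfolding A_def by auto
      have "\<omega> \<in> {\<omega> \<in> space M. chain (down N) (upP N) x0 (\<lambda>j. U j \<omega>) k = x}" using sp c by simp
      then have "\<omega> \<in> {\<omega> \<in> space M. restrict (\<lambda>j. U j \<omega>) {..<k} \<in> Ach (down N) (upP N) x0 k x}"
        by (simp only: chain_event)
      then show "\<omega> \<in> ?B" using J by simp
    qed
    have e2: "prob {\<omega> \<in> space M. (\<lambda>j. U j \<omega>) \<in> A k x0 y0 x} \<le> prob ?B"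
      by (rule finite_measure_mono[OF sub event_RU[OF Ach_sets Jgap_sets]])
    have e3: "prob ?B = pk (down N) (upP N) x0 k x * prob {\<omega> \<in> space M. U k \<omega> \<in> ?J}"
      unfolding indep_past[OF Ach_sets Jgap_sets] pk_def chain_event ..
    have e4: "prob {\<omega> \<in> space M. U k \<omega> \<in> ?J} \<le> g x"
      unfolding probU[OF Jgap_sets] g_def by (rule Jgap_meas)
    have pk0: "0 \<le> pk (down N) (upP N) x0 k x" unfolding pk_def by simp
    have e5: "prob ?B \<le> pk (down N) (upP N) x0 k x * g x"
      unfolding e3 by (rule mult_left_mono[OF e4 pk0])
    have q0: "q x0 y0 \<ge> 0" unfolding q_def by simp
    show ?thesis unfolding e1 by (rule mult_left_mono[OF order_trans[OF e2 e5] q0])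
  qed
  have q_sum: "(\<Sum>y0\<in>S. q x0 y0) \<le> checkpi N x0" for x0
  proof -
    have "(\<Sum>y0\<in>S. q x0 y0) = prob (\<Union>y0\<in>S. {\<omega> \<in> space M. X0 \<omega> = x0 \<and> Y0 \<omega> = y0})"
      unfolding q_def
      by (rule finite_measure_finite_Union[symmetric]) (use finS evX evY in \<open>auto simp: disjoint_family_on_def\<close>)
    also have "\<dots> \<le> prob {\<omega> \<in> space M. X0 \<omega> = x0}"
      by (rule finite_measure_mono) (use evX in auto)
    also have "\<dots> = checkpi N x0" by (rule X0_law)
    finally show ?thesis .
  qed
  have q_nonneg: "q x0 y0 \<ge> 0" for x0 y0 unfolding q_def by simp
  have pk_nonneg: "pk (down N) (upP N) x0 k x \<ge> 0" for x0 k x unfolding pk_def by simp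
  have g_nonneg: "g x \<ge> 0" for x unfolding g_def by simp
  define W where "W k = (\<Union>x0\<in>S. \<Union>y0\<in>S. \<Union>x\<in>{..Mx}. E k x0 y0 x)" for k
  have W_ev: "W k \<in> events" for k unfolding W_def using finS E_ev by (intro sets.finite_UN) auto
  have W_bound: "prob (W k) \<le> 2 ^ N / fact N" for k
  proof -
    have "prob (W k) \<le> (\<Sum>x0\<in>S. prob (\<Union>y0\<in>S. \<Union>x\<in>{..Mx}. E k x0 y0 x))"
      unfolding W_def by (rule union_bound) (use finS E_ev in \<open>auto intro!: sets.finite_UN\<close>)
    also have "\<dots> \<le> (\<Sum>x0\<in>S. \<Sum>y0\<in>S. prob (\<Union>x\<in>{..Mx}. E k x0 y0 x))"
      by (rule sum_mono, rule union_bound) (use finS E_ev in \<open>auto intro!: sets.finite_UN\<close>)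
    also have "\<dots> \<le> (\<Sum>x0\<in>S. \<Sum>y0\<in>S. \<Sum>x\<le>Mx. prob (E k x0 y0 x))"
      by (rule sum_mono, rule sum_mono, rule union_bound) (use E_ev in auto)
    also have "\<dots> \<le> (\<Sum>x0\<in>S. \<Sum>y0\<in>S. \<Sum>x\<le>Mx. q x0 y0 * (pk (down N) (upP N) x0 k x * g x))"
      by (rule sum_mono, rule sum_mono, rule sum_mono, rule E_bound)
    also have "\<dots> = (\<Sum>x0\<in>S. \<Sum>x\<le>Mx. (\<Sum>y0\<in>S. q x0 y0) * (pk (down N) (upP N) x0 k x * g x))"
      by (rule sum.cong, simp, subst sum.swap, simp add: sum_distrib_right)
    also have "\<dots> \<le> (\<Sum>x0\<in>S. \<Sum>x\<le>Mx. checkpi N x0 * (pk (down N) (upP N) x0 k x * g x))"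
      by (rule sum_mono, rule sum_mono, rule mult_right_mono)
         (use q_sum pk_nonneg g_nonneg in auto)
    also have "\<dots> = (\<Sum>x\<le>Mx. (\<Sum>x0\<in>S. checkpi N x0 * pk (down N) (upP N) x0 k x) * g x)"
      by (subst sum.swap) (simp add: sum_distrib_right mult.assoc)
    also have "\<dots> = (\<Sum>x\<le>Mx. checkpi N x * g x)" unfolding stat ..
    also have "\<dots> = (\<Sum>x\<le>N - 4. checkpi N x * g x)"
      by (rule sum.mono_neutral_right) (auto simp: Mx_def cp0)
    also have "\<dots> \<le> 2 ^ N / fact N" unfolding g_def by (rule gap_sum[OF N5])
    finally show ?thesis .
  qed
  define Bad where "Bad = {\<omega> \<in> space M. X0 \<omega> \<notin> S} \<union> {\<omega> \<in> space M. Y0 \<omega> \<notin> S}"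
  have Bad_ev: "Bad \<in> events" unfolding Bad_def using evXS evYS by auto
  have Bad0: "prob Bad = 0"
  proof -
    have "prob Bad \<le> prob {\<omega> \<in> space M. X0 \<omega> \<notin> S} + prob {\<omega> \<in> space M. Y0 \<omega> \<notin> S}"
      unfolding Bad_def by (rule measure_subadditive[OF evXS evYS]) simp_all
    thus ?thesis using bX bY by (simp add: measure_nonneg antisym)
  qed
  have cover: "{\<omega> \<in> space M. 0 < Zcount N (X0 \<omega>) (Y0 \<omega>) (\<lambda>k. U k \<omega>) n} \<subseteq> Bad \<union> (\<Union>k\<in>{..<n}. W k)"
  proof
    fix \<omega> assume "\<omega> \<in> {\<omega> \<in> space M. 0 < Zcount N (X0 \<omega>) (Y0 \<omega>) (\<lambda>k. U k \<omega>) n}"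
    then have sp: "\<omega> \<in> space M" and Z: "0 < Zcount N (X0 \<omega>) (Y0 \<omega>) (\<lambda>k. U k \<omega>) n" by auto
    show "\<omega> \<in> Bad \<union> (\<Union>k\<in>{..<n}. W k)"
    proof (cases "\<omega> \<in> Bad")
      case True then show ?thesis by simp
    next
      case False
      then have x0S: "X0 \<omega> \<in> S" and y0S: "Y0 \<omega> \<in> S" using sp unfolding Bad_def by auto
      let ?u = "\<lambda>k. U k \<omega>"
      have ne: "{k. k < n \<and> Xchain N (X0 \<omega>) ?u k = Ychain N (Y0 \<omega>) ?u k
                  \<and> Xchain N (X0 \<omega>) ?u (k + 1) \<noteq> Ychain N (Y0 \<omega>) ?u (k + 1)} \<noteq> {}"
      proof
        assume "{k. k < n \<and> Xchain N (X0 \<omega>) ?u k = Ychain N (Y0 \<omega>) ?u k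
                  \<and> Xchain N (X0 \<omega>) ?u (k + 1) \<noteq> Ychain N (Y0 \<omega>) ?u (k + 1)} = {}"
        then have "Zcount N (X0 \<omega>) (Y0 \<omega>) ?u n = 0" unfolding Zcount_def by (simp only: card.empty)
        then show False using Z by simp
      qed
      then obtain k where k: "k < n" "Xchain N (X0 \<omega>) ?u k = Ychain N (Y0 \<omega>) ?u k"
        "Xchain N (X0 \<omega>) ?u (k + 1) \<noteq> Ychain N (Y0 \<omega>) ?u (k + 1)"
        by blast
      define x where "x = Xchain N (X0 \<omega>) ?u k"
      have cx: "chain (down N) (upP N) (X0 \<omega>) ?u k = x" unfolding x_def Xchain_def ..
      have cy: "chain (down N) (upR N) (Y0 \<omega>) ?u k = x" using k(2) unfolding x_def Xchain_def Ychain_def by simp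
      have "step (down N) (upP N) x (U k \<omega>) \<noteq> step (down N) (upR N) x (U k \<omega>)"
        using k(3) cx cy unfolding Xchain_def Ychain_def by simp
      then have J: "U k \<omega> \<in> Jgap (upP N) (upR N) x" by (rule Jgap_cover)
      have "x \<le> X0 \<omega> + k" using chain_le[of "down N" "upP N" "X0 \<omega>" ?u k] cx by simp
      then have xM: "x \<in> {..Mx}" using x0S k(1) unfolding S_def Mx_def by simp
      have "\<omega> \<in> E k (X0 \<omega>) (Y0 \<omega>) x" unfolding E_def A_def using sp cx cy J by simp
      then have "\<omega> \<in> W k" unfolding W_def using x0S y0S xM by blast
      then show ?thesis using k(1) by blast
    qed
  qed
  have "prob {\<omega> \<in> space M. 0 < Zcount N (X0 \<omega>) (Y0 \<omega>) (\<lambda>k. U k \<omega>) n} \<le> prob (Bad \<union> (\<Union>k\<in>{..<n}. W k))"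
    by (rule finite_measure_mono[OF cover]) (use Bad_ev W_ev in auto)
  also have "\<dots> \<le> prob Bad + prob (\<Union>k\<in>{..<n}. W k)"
    by (rule measure_subadditive) (use Bad_ev W_ev in auto)
  also have "\<dots> \<le> 0 + (\<Sum>k<n. prob (W k))"
    using Bad0 union_bound[of "{..<n}" W] W_ev by simp
  also have "\<dots> \<le> (\<Sum>k<n. 2 ^ N / fact N)"
    unfolding add_0_left by (rule sum_mono, rule W_bound)
  also have "\<dots> = 2 ^ N * real n / fact N" by simp
  finally show ?thesis .
qed


end
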